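(* Let $\beta>0$, set $\alpha=1/\beta$, and let $m,n\ge 1$ be integers and $\mathbf{M}$ a real $m\times n$ matrix. Let $\mathbf{x}^{n,\beta}\in\mathbb{H}^{n,\beta}$ and let $\mathbf{x}^{n,\alpha}=p_{\mathbb{H}^{n,\beta}\to\mathbb{D}^{n,\alpha}}(\mathbf{x}^{n,\beta})\in\mathbb{D}^{n,\alpha}$ be the same point of hyperbolic space represented in the Poincar\'e ball model. Then the Lorentzian matrix-vector multiplication and the M\"obius matrix-vector multiplication are equivalent, i.e. $$p_{\mathbb{H}^{m,\beta}\to\mathbb{D}^{m,\alpha}}\big(\mathbf{M}\otimes^{\beta}\mathbf{x}^{n,\beta}\big)=\mathbf{M}\otimes^{\alpha}\mathbf{x}^{n,\alpha}.$$
   Context: Lorentzian scalar product on $\mathbb{R}^{n+1}$: $\langle \mathbf{x},\mathbf{y}\rangle_{\mathcal{L}}=-x_0y_0+\sum_{i=1}^n x_iy_i$, and $\|\mathbf{v}\|_{\mathcal{L}}=\sqrt{\langle\mathbf{v},\mathbf{v}\rangle_{\mathcal{L}}}$. Hyperboloid model: $\mathbb{H}^{n,\beta}=\{\mathbf{x}\in\mathbb{R}^{n+1}:\langle\mathbf{x},\mathbf{x}\rangle_{\mathcal{L}}=-\beta,\ x_0>0\}$, with origin $\mathbf{0}=(\sqrt{\beta},0,\dots,0)$ and tangent space $\mathcal{T}_{\mathbf{0}}\mathbb{H}^{n,\beta}=\{\mathbf{v}:\langle\mathbf{v},\mathbf{0}\rangle_{\mathcal{L}}=0\}=\{\mathbf{v}:v_0=0\}$.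 Intrinsic distance $d^\beta_{\mathbb{H}}(\mathbf{x},\mathbf{y})=\sqrt{\beta}\,\mathrm{arcosh}(-\langle\mathbf{x},\mathbf{y}\rangle_{\mathcal{L}}/\beta)$. Exponential map at the origin: for $\mathbf{v}\in\mathcal{T}_{\mathbf{0}}\mathbb{H}^{n,\beta}$, $\mathbf{v}\neq 0$, $\exp^\beta_{\mathbf{0}}(\mathbf{v})=\cosh(\|\mathbf{v}\|_{\mathcal{L}}/\sqrt{\beta})\mathbf{0}+\sqrt{\beta}\sinh(\|\mathbf{v}\|_{\mathcal{L}}/\sqrt{\beta})\,\mathbf{v}/\|\mathbf{v}\|_{\mathcal{L}}$, and $\exp^\beta_{\mathbf{0}}(0)=\mathbf{0}$. Logarithmic map at the origin: for $\mathbf{y}\in\mathbb{H}^{n,\beta}$, $\mathbf{y}\ne\mathbf{0}$, $\log^\beta_{\mathbf{0}}(\mathbf{y})=d^\beta_{\mathbb{H}}(\mathbf{0},\mathbf{y})\,\frac{\mathbf{y}+\frac1\beta\langle\mathbf{0},\mathbf{y}\rangle_{\mathcal{L}}\mathbf{0}}{\|\mathbf{y}+\frac1\beta\langle\mathbf{0},\mathbf{y}\rangle_{\mathcal{L}}\mathbf{0}\|_{\mathcal{L}}}$, and $\log^\beta_{\mathbf{0}}(\mathbf{0})=0$. Lorentzian matrix-vector multiplication: for $\mathbf{x}\in\mathbb{H}^{n,\beta}$, writing $\log^\beta_{\mathbf{0}}(\mathbf{x})=(v_0,v_1,\dots,v_n)$, set $\hat{\mathbf{M}}(\mathbf{v})=(0,\mathbf{M}(v_1,\dots,v_n)^T)\in\mathbb{R}^{m+1}$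 and $\mathbf{M}\otimes^\beta\mathbf{x}=\exp^\beta_{\mathbf{0}}(\hat{\mathbf{M}}(\log^\beta_{\mathbf{0}}(\mathbf{x})))\in\mathbb{H}^{m,\beta}$ (exponential map of $\mathbb{H}^{m,\beta}$). Poincar\'e ball model: $\mathbb{D}^{n,\alpha}=\{\mathbf{x}\in\mathbb{R}^n:\alpha\|\mathbf{x}\|^2<1\}$ (Euclidean norm). M\"obius matrix-vector multiplication: $\mathbf{M}\otimes^\alpha\mathbf{x}=\frac{1}{\sqrt{\alpha}}\tanh\!\Big(\frac{\|\mathbf{M}\mathbf{x}\|}{\|\mathbf{x}\|}\tanh^{-1}(\sqrt{\alpha}\|\mathbf{x}\|)\Big)\frac{\mathbf{M}\mathbf{x}}{\|\mathbf{M}\mathbf{x}\|}$ for $\mathbf{M}\mathbf{x}\neq 0$, and $=0$ if $\mathbf{M}\mathbf{x}=0$. Isometry between models: $p_{\mathbb{H}^{n,\beta}\to\mathbb{D}^{n,\alpha}}(x_0,x_1,\dots,x_n)=\frac{\sqrt{\beta}(x_1,\dots,x_n)}{\sqrt{\beta}+x_0}$. *)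

theory Defs
  imports "HOL-Analysis.Analysis"
begin

text \<open>A point of R^(n+1) is represented as a pair (x0, (x1..xn)) :: real \<times> (real^'n),
  the spatial dimension n being the (arbitrary finite) cardinality of the index type 'n.\<close>

definition lorentz_inner :: "real \<times> 'a::real_inner \<Rightarrow> real \<times> 'a \<Rightarrow> real" where
  "lorentz_inner x y = - (fst x * fst y) + snd x \<bullet> snd y"

definition lorentz_norm :: "real \<times> 'a::real_inner \<Rightarrow> real" where
  "lorentz_norm v = sqrt (lorentz_inner v v)"

definition hyperboloid :: "real \<Rightarrow> (real \<times> 'a::real_inner) set" where
  "hyperboloid \<beta> = {x. lorentz_inner x x = - \<beta> \<and> fst x > 0}"

definition hyp_origin :: "real \<Rightarrow> real \<times> 'a::real_inner" where
  "hyp_origin \<beta> = (sqrt \<beta>, 0)"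

definition hyp_dist :: "real \<Rightarrow> real \<times> 'a::real_inner \<Rightarrow> real \<times> 'a \<Rightarrow> real" where
  "hyp_dist \<beta> x y = sqrt \<beta> * arcosh (- lorentz_inner x y / \<beta>)"

definition hyp_exp0 :: "real \<Rightarrow> real \<times> 'a::real_inner \<Rightarrow> real \<times> 'a" where
  "hyp_exp0 \<beta> v = (if v = 0 then hyp_origin \<beta> else
     cosh (lorentz_norm v / sqrt \<beta>) *\<^sub>R hyp_origin \<beta>
     + (sqrt \<beta> * sinh (lorentz_norm v / sqrt \<beta>)) *\<^sub>R ((1 / lorentz_norm v) *\<^sub>R v))"

definition hyp_log0 :: "real \<Rightarrow> real \<times> 'a::real_inner \<Rightarrow> real \<times> 'a" where
  "hyp_log0 \<beta> y = (if y = hyp_origin \<beta> then 0 else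
     (let w = y + ((1 / \<beta>) * lorentz_inner (hyp_origin \<beta>) y) *\<^sub>R hyp_origin \<beta>
      in hyp_dist \<beta> (hyp_origin \<beta>) y *\<^sub>R ((1 / lorentz_norm w) *\<^sub>R w)))"

definition lorentz_mv :: "real \<Rightarrow> real^'n^'m \<Rightarrow> real \<times> (real^'n) \<Rightarrow> real \<times> (real^'m)" where
  "lorentz_mv \<beta> M x = hyp_exp0 \<beta> (0, M *v snd (hyp_log0 \<beta> x))"

definition poincare_ball :: "real \<Rightarrow> 'a::real_normed_vector set" where
  "poincare_ball \<alpha> = {x. \<alpha> * (norm x)^2 < 1}"

definition mobius_mv :: "real \<Rightarrow> real^'n^'m \<Rightarrow> real^'n \<Rightarrow> real^'m" where
  "mobius_mv \<alpha> M x = (if M *v x = 0 then 0 else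
     ((1 / sqrt \<alpha>) * tanh (norm (M *v x) / norm x * artanh (sqrt \<alpha> * norm x)))
       *\<^sub>R ((1 / norm (M *v x)) *\<^sub>R (M *v x)))"

definition hyp_to_ball :: "real \<Rightarrow> real \<times> 'a::real_vector \<Rightarrow> 'a" where
  "hyp_to_ball \<beta> x = (sqrt \<beta> / (sqrt \<beta> + fst x)) *\<^sub>R snd x"

end

theory Submission
  imports Defs
begin

lemma half_tanh: "sinh (t::real) / (1 + cosh t) = tanh (t / 2)"
proof -
  have t: "t = 2 * (t/2)" by simp
  have c: "cosh (t/2) > 0" by simp
  have "sinh t / (1 + cosh t) = 2 * sinh (t/2) * cosh (t/2) / (2 * (cosh (t/2))^2)"
    by (subst (1 2) t, simp only: sinh_double cosh_double_cosh) simp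
  also have "\<dots> = sinh (t/2) / cosh (t/2)" using c by (simp add: power2_eq_square)
  finally show ?thesis by (simp add: tanh_def)
qed

lemma artanh_key:
  assumes "(c::real) \<ge> 1"
  shows "artanh (sqrt (c^2 - 1) / (1 + c)) = arcosh c / 2"
proof -
  have "sqrt (c^2 - 1) / (1 + c) = sinh (arcosh c) / (1 + cosh (arcosh c))"
    using assms by (simp add: sinh_arcosh_real)
  also have "\<dots> = tanh (arcosh c / 2)" by (rule half_tanh)
  finally show ?thesis by (simp add: artanh_tanh_real)
qed

theorem theorem3p1:
  fixes \<beta> \<alpha> :: real and M :: "real^'n^'m" and x :: "real \<times> (real^'n)"
  assumes "\<beta> > 0" and "\<alpha> = 1 / \<beta>" and "x \<in> hyperboloid \<beta>"
  shows "hyp_to_ball \<beta> (lorentz_mv \<beta> M x) = mobius_mv \<alpha> M (hyp_to_ball \<beta> x)"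
proof -
  obtain x0 u where xe: "x = (x0, u)" by (cases x)
  define s where "s = sqrt \<beta>"
  have s0: "s > 0" using assms(1) by (simp add: s_def)
  have ss: "s * s = \<beta>" using assms(1) by (simp add: s_def)
  have hx: "- (x0 * x0) + u \<bullet> u = - \<beta>" "x0 > 0"
    using assms(3) by (auto simp: hyperboloid_def lorentz_inner_def xe)
  have uu: "u \<bullet> u = (norm u)^2" by (simp add: power2_norm_eq_inner)
  have x0sq: "x0^2 = \<beta> + (norm u)^2" using hx uu by (simp add: power2_eq_square)
  have sa: "sqrt \<alpha> = 1 / s" using assms(2) by (simp add: s_def real_sqrt_divide)
  show ?thesis
  proof (cases "u = 0")
    case True
    then have x0s: "x0 = s" using x0sq hx(2) s0 ss
      by (metis add.right_neutral norm_zero power2_eq_square power_zero_numeral real_sqrt_unique s_def zero_less_numeral order_less_imp_le)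
    have "x = hyp_origin \<beta>" using True x0s by (simp add: xe hyp_origin_def s_def)
    then show ?thesis using True
      by (simp add: lorentz_mv_def hyp_log0_def hyp_exp0_def hyp_to_ball_def mobius_mv_def xe zero_prod_def hyp_origin_def)
  next
    case False
    have nu: "norm u > 0" using False by simp
    have x0gt: "x0 > s"
    proof -
      have "x0^2 > s^2" using x0sq nu ss by (simp add: power2_eq_square)
      then show ?thesis using hx(2) s0 by (meson abs_le_square_iff linorder_not_le abs_of_pos order.strict_implies_order power2_less_imp_less)
    qed
    define c where "c = x0 / s"
    have c1: "c > 1" using x0gt s0 by (simp add: c_def)
    have nuc: "norm u = s * sqrt (c^2 - 1)"
    proof -
      have c2: "c^2 - 1 = (norm u)^2 / \<beta>"
        using s0 x0sq ss assms(1) by (simp add: c_def power_divide add_divide_distrib power2_eq_square)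
      have "(s * sqrt (c^2 - 1))^2 = s^2 * (c^2 - 1)"
        using c1 by (simp add: power_mult_distrib)
      also have "\<dots> = (norm u)^2" using c2 ss s0 assms(1) by (simp add: power2_eq_square)
      finally have "(s * sqrt (c^2 - 1))^2 = (norm u)^2" .
      then show ?thesis using s0 c1 by (metis norm_ge_zero power2_eq_iff_nonneg mult_nonneg_nonneg less_imp_le real_sqrt_ge_zero diff_ge_0_iff_ge one_le_power)
    qed
    define d where "d = s * arcosh c"
    have d0: "d > 0" using c1 s0 by (simp add: d_def)
    have notorig: "x \<noteq> hyp_origin \<beta>" using False by (simp add: xe hyp_origin_def)
    have log: "hyp_log0 \<beta> x = (0, (d / norm u) *\<^sub>R u)"
    proof -
      have li: "lorentz_inner (hyp_origin \<beta>) x = - (s * x0)"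
        by (simp add: lorentz_inner_def hyp_origin_def xe s_def)
      have w: "x + ((1 / \<beta>) * lorentz_inner (hyp_origin \<beta>) x) *\<^sub>R hyp_origin \<beta> = (0, u)"
        using li ss s0 assms(1) by (simp add: xe hyp_origin_def s_def[symmetric] field_simps)
      have ln: "lorentz_norm (0::real, u) = norm u"
        by (simp add: lorentz_norm_def lorentz_inner_def uu)
      have "s * x0 / \<beta> = x0 / s" using ss s0 by (metis mult.commute nonzero_mult_divide_mult_cancel_left order_less_irrefl)
      then have hd: "hyp_dist \<beta> (hyp_origin \<beta>) x = d"
        using li by (simp add: hyp_dist_def d_def c_def s_def[symmetric])
      show ?thesis using notorig w ln hd by (simp add: hyp_log0_def Let_def)
    qed
    define y where "y = (s / (s + x0)) *\<^sub>R u"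
    have htb: "hyp_to_ball \<beta> x = y" by (simp add: hyp_to_ball_def xe y_def s_def)
    have My: "M *v y = (s / (s + x0)) *\<^sub>R (M *v u)" by (simp add: y_def matrix_vector_mult_scaleR)
    have pos: "s / (s + x0) > 0" using s0 hx(2) by simp
    show ?thesis
    proof (cases "M *v u = 0")
      case True
      then show ?thesis unfolding htb
        by (simp add: lorentz_mv_def log matrix_vector_mult_scaleR hyp_exp0_def zero_prod_def
            hyp_to_ball_def hyp_origin_def mobius_mv_def My)
    next
      case Mu: False
      define v where "v = (d / norm u) *\<^sub>R (M *v u)"
      have v0: "v \<noteq> 0" using Mu d0 nu by (simp add: v_def)
      have nv: "norm v = d * norm (M *v u) / norm u" using d0 nu by (simp add: v_def)
      have ln: "lorentz_norm (0::real, v) = norm v"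
        by (simp add: lorentz_norm_def lorentz_inner_def power2_norm_eq_inner[symmetric])
      define t where "t = norm v / s"
      have ex: "lorentz_mv \<beta> M x = (s * cosh t, (s * sinh t / norm v) *\<^sub>R v)"
        using v0 ln by (simp add: zero_prod_def lorentz_mv_def log matrix_vector_mult_scaleR v_def[symmetric]
            hyp_exp0_def hyp_origin_def s_def[symmetric] t_def)
      have lhs: "hyp_to_ball \<beta> (lorentz_mv \<beta> M x) = (s * tanh (t/2) / norm (M *v u)) *\<^sub>R (M *v u)"
      proof -
        have "hyp_to_ball \<beta> (lorentz_mv \<beta> M x) = (s / (s + s * cosh t) * (s * sinh t / norm v) * (d / norm u)) *\<^sub>R (M *v u)"
          by (simp add: ex hyp_to_ball_def s_def[symmetric] v_def)
        also have "s / (s + s * cosh t) * (s * sinh t / norm v) * (d / norm u) = s * (sinh t / (1 + cosh t)) / norm (M *v u)"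
        proof -
          have cp: "cosh t > 0" by simp
          have "norm (M *v u) > 0" using Mu by simp
          then have "norm (M *v u) + cosh t * norm (M *v u) > 0" using cp by (simp add: add_pos_pos)
          have e1: "s / (s + s * cosh t) = 1 / (1 + cosh t)"
          proof -
            have "s + s * cosh t = s * (1 + cosh t)" by (simp add: algebra_simps)
            then show ?thesis using s0 by simp
          qed
          have e2: "(s * sinh t / norm v) * (d / norm u) = s * sinh t / norm (M *v u)"
            using d0 nu Mu by (simp add: nv)
          show ?thesis by (subst mult.assoc, subst e1, subst e2) simp
        qed
        finally show ?thesis by (simp add: half_tanh)
      qed
      have ny: "norm y = s * norm u / (s + x0)" using s0 hx(2) by (simp add: y_def)
      have ar: "artanh (sqrt \<alpha> * norm y) = arcosh c / 2"
      proof -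
        have "sqrt \<alpha> * norm y = sqrt (c^2 - 1) / (1 + c)"
          using s0 hx(2) by (simp add: sa ny nuc c_def field_simps)
        then show ?thesis using artanh_key c1 by simp
      qed
      have rat: "norm (M *v y) / norm y = norm (M *v u) / norm u"
      proof -
        have a: "norm (M *v y) = (s / (s + x0)) * norm (M *v u)" using s0 hx(2) by (simp add: My)
        have b: "norm y = (s / (s + x0)) * norm u" using s0 hx(2) by (simp add: y_def)
        show ?thesis unfolding a b using s0 hx(2) by simp
      qed
      have tt: "t / 2 = norm (M *v u) / norm u * (arcosh c / 2)"
        using s0 by (simp add: t_def nv d_def)
      have rhs: "mobius_mv \<alpha> M y = (s * tanh (t/2) / norm (M *v u)) *\<^sub>R (M *v u)"
      proof -
        have My0: "M *v y \<noteq> 0" using Mu s0 hx(2) by (simp add: My)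
        have "mobius_mv \<alpha> M y = ((1 / sqrt \<alpha>) * tanh (norm (M *v u) / norm u * (arcosh c / 2)))
           *\<^sub>R ((1 / norm (M *v y)) *\<^sub>R (M *v y))"
          unfolding mobius_mv_def rat ar using My0 by simp
        also have "(1 / norm (M *v y)) *\<^sub>R (M *v y) = (1 / norm (M *v u)) *\<^sub>R (M *v u)"
          using s0 hx(2) by (simp add: My)
        finally show ?thesis using s0 by (simp add: sa tt)
      qed
      show ?thesis using lhs rhs htb by simp
    qed
  qed
qed

end
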